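(* Let $a>0$ and $b>0$, and let the two summands below be independent. Then $$\mathbf{B}'_{a,b}+\mathbf{B}'_{a,b}\;\succ_{st}\;\mathbf{B}'_{2a,b}\quad\Longleftrightarrow\quad b\le 1.$$
   Context: For $p,q>0$, $\mathbf{B}'_{p,q}$ denotes a beta prime random variable with density $\frac{\Gamma(p+q)}{\Gamma(p)\Gamma(q)}\frac{x^{p-1}}{(1+x)^{p+q}}$ on $(0,\infty)$. For positive random variables $X,Y$, $X\succ_{st}Y$ means $\mathbb{P}[X\le x]\le\mathbb{P}[Y\le x]$ for all $x\ge0$. *)

theory Defs
  imports "HOL-Probability.Probability"
begin

definition betaprime_density :: "real \<Rightarrow> real \<Rightarrow> real \<Rightarrow> real" where
  "betaprime_density p q x =
     (if 0 < x then Gamma (p + q) / (Gamma p * Gamma q) * x powr (p - 1) / (1 + x) powr (p + q)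
      else 0)"

definition betaprime :: "real \<Rightarrow> real \<Rightarrow> real measure" where
  "betaprime p q = density lborel (\<lambda>x. ennreal (betaprime_density p q x))"

definition stoch_dom :: "real measure \<Rightarrow> real measure \<Rightarrow> bool" where
  "stoch_dom M N \<longleftrightarrow> (\<forall>x\<ge>0. measure M {..x} \<le> measure N {..x})"

end

theory Submission
  imports Defs "HOL-Real_Asymp.Real_Asymp"
begin


definition bpf :: "real \<Rightarrow> real \<Rightarrow> real \<Rightarrow> real" where
  "bpf p q x = x powr (p - 1) / (1 + x) powr (p + q)"

lemma beta_nn:
  fixes p q :: real
  assumes p: "0 < p" and q: "0 < q"
  shows "(\<integral>\<^sup>+t. ennreal (indicator {0..1} t * (t powr (p - 1) * (1 - t) powr (q - 1))) \<partial>lborel) = ennreal (Beta p q)"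
  using nn_integral_has_integral_lebesgue[OF _ has_integral_Beta_real[OF p q]] by simp

lemma beta_integrable:
  fixes p q :: real
  assumes p: "0 < p" and q: "0 < q"
  shows "set_integrable lborel {0..1} (\<lambda>t. t powr (p - 1) * (1 - t) powr (q - 1))"
  unfolding set_integrable_def
  using beta_nn[OF p q] by (intro integrableI_nn_integral_finite[where x="Beta p q"]) auto

lemma beta_LBINT:
  fixes p q :: real
  assumes p: "0 < p" and q: "0 < q"
  shows "(LBINT t=0..1. t powr (p - 1) * (1 - t) powr (q - 1)) = Beta p q"
proof -
  have "(LBINT t=0..1. t powr (p - 1) * (1 - t) powr (q - 1)) = (LBINT t=ereal 0..ereal 1. t powr (p - 1) * (1 - t) powr (q - 1))"
    by (simp add: zero_ereal_def one_ereal_def)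
  also have "\<dots> = (LINT t:{0..1}|lborel. t powr (p - 1) * (1 - t) powr (q - 1))"
    by (rule interval_integral_Icc) simp
  also have "\<dots> = integral {0..1} (\<lambda>t. t powr (p - 1) * (1 - t) powr (q - 1))"
    by (rule set_borel_integral_eq_integral(2)[OF beta_integrable[OF p q]])
  also have "\<dots> = Beta p q" using has_integral_Beta_real[OF p q] by (rule integral_unique)
  finally show ?thesis .
qed

lemma g_lim_top: "filterlim (\<lambda>x::real. x / (1 - x)) at_top (at_left 1)"
  by real_asymp

lemma bpf_norm:
  assumes p: "0 < p" and q: "0 < q"
  shows "set_integrable lborel {0<..} (bpf p q)" "(LINT x:{0<..}|lborel. bpf p q x) = Beta p q"
proof -
  have eq: "bpf p q (t / (1 - t)) * (1 / (1 - t)^2) = t powr (p - 1) * (1 - t) powr (q - 1)"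
    if "0 < t" "t < 1" for t
  proof -
    have 1: "1 + t / (1 - t) = 1 / (1 - t)" using that by (simp add: field_simps)
    have 2: "(t / (1 - t)) powr (p - 1) = t powr (p - 1) / (1 - t) powr (p - 1)"
      using that by (simp add: powr_divide)
    have 3: "(1 / (1 - t)) powr (p + q) = 1 / (1 - t) powr (p + q)"
      using that by (simp add: powr_divide)
    have "bpf p q (t / (1 - t)) = (t powr (p - 1) / (1 - t) powr (p - 1)) * (1 - t) powr (p + q)"
      unfolding bpf_def 1 2 3 by simp
    also have "\<dots> = t powr (p - 1) * (1 - t) powr (q + 1)"
    proof -
      have "(1 - t) powr (p + q) = (1 - t) powr ((p - 1) + (q + 1))" by simp
      also have "\<dots> = (1 - t) powr (p - 1) * (1 - t) powr (q + 1)" by (rule powr_add)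
      finally show ?thesis using that by simp
    qed
    also have "(1 - t) powr (q + 1) = (1 - t) powr (q - 1) * (1 - t)^2"
    proof -
      have "(1 - t) powr (q + 1) = (1 - t) powr ((q - 1) + 2)" by (simp add: add.commute)
      also have "\<dots> = (1 - t) powr (q - 1) * (1 - t) powr 2" by (rule powr_add)
      finally show ?thesis using that by (simp add: powr_realpow)
    qed
    finally show ?thesis using that by (simp add: field_simps)
  qed
  have intfg: "set_integrable lborel (einterval 0 1) (\<lambda>t. bpf p q (t / (1 - t)) * (1 / (1 - t)^2))"
  proof -
    have "set_integrable lborel (einterval 0 1) (\<lambda>t. t powr (p - 1) * (1 - t) powr (q - 1))"
      by (rule set_integrable_subset[OF beta_integrable[OF p q]]) (auto simp: einterval_def zero_ereal_def one_ereal_def)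
    moreover have "set_integrable lborel (einterval 0 1) (\<lambda>t. t powr (p - 1) * (1 - t) powr (q - 1))
       = set_integrable lborel (einterval 0 1) (\<lambda>t. bpf p q (t / (1 - t)) * (1 / (1 - t)^2))"
      by (rule set_integrable_cong) (auto simp: eq[symmetric] einterval_def zero_ereal_def one_ereal_def simp del: times_divide_eq_right)
    ultimately show ?thesis by simp
  qed
  have deriv: "DERIV (\<lambda>t. t / (1 - t)) x :> 1 / (1 - x)^2" if "0 < ereal x" "ereal x < 1" for x
    using that by (auto intro!: derivative_eq_intros simp: field_simps power2_eq_square one_ereal_def)
  have contf: "isCont (bpf p q) (x / (1 - x))" if "0 < ereal x" "ereal x < 1" for x
    using that unfolding bpf_def by (auto intro!: continuous_intros simp: one_ereal_def field_simps)
  have contg': "isCont (\<lambda>t. 1 / (1 - t)^2) x" if "0 < ereal x" "ereal x < 1" for x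
    using that by (auto intro!: continuous_intros simp: one_ereal_def)
  have fnn: "0 \<le> bpf p q (x / (1 - x))" if "0 < ereal x" "ereal x < 1" for x
    using that by (auto simp: bpf_def one_ereal_def)
  have A: "((ereal \<circ> (\<lambda>t. t / (1 - t)) \<circ> real_of_ereal) \<longlongrightarrow> 0) (at_right 0)"
    by (auto simp: zero_ereal_def ereal_tendsto_simps intro!: tendsto_eq_intros)
  have B: "((ereal \<circ> (\<lambda>t. t / (1 - t)) \<circ> real_of_ereal) \<longlongrightarrow> \<infinity>) (at_left 1)"
    using g_lim_top by (auto simp: one_ereal_def ereal_tendsto_simps)
  note S = interval_integral_substitution_nonneg[of 0 1 "\<lambda>t. t / (1 - t)" "\<lambda>t. 1 / (1 - t)^2" "bpf p q",
     OF _ deriv contf contg' fnn _ A B intfg]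
  show "set_integrable lborel {0<..} (bpf p q)"
    using S(1) by (simp add: zero_ereal_def)
  have "(LINT x:{0<..}|lborel. bpf p q x) = (LBINT x=0..\<infinity>. bpf p q x)"
    by (simp add: interval_lebesgue_integral_0_infty)
  also have "\<dots> = (LBINT t=0..1. bpf p q (t / (1 - t)) * (1 / (1 - t)^2))"
    by (rule S(2)) auto
  also have "\<dots> = (LBINT t=0..1. t powr (p - 1) * (1 - t) powr (q - 1))"
    by (rule interval_integral_cong) (auto simp: eq einterval_def zero_ereal_def one_ereal_def simp del: times_divide_eq_right)
  also have "\<dots> = Beta p q" by (rule beta_LBINT[OF p q])
  finally show "(LINT x:{0<..}|lborel. bpf p q x) = Beta p q" .
qed

definition bpK :: "real \<Rightarrow> real \<Rightarrow> real" where
  "bpK p q = Gamma (p + q) / (Gamma p * Gamma q)"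

lemma bpK_pos: "0 < p \<Longrightarrow> 0 < q \<Longrightarrow> 0 < bpK p q"
  by (simp add: bpK_def Gamma_real_pos)

lemma bpK_Beta: "0 < p \<Longrightarrow> 0 < q \<Longrightarrow> bpK p q * Beta p q = 1"
proof -
  assume "0 < p" "0 < q"
  then have "Gamma p > 0" "Gamma q > 0" "Gamma (p + q) > 0" by (simp_all add: Gamma_real_pos)
  then show ?thesis by (simp add: bpK_def Beta_def field_simps)
qed

lemma bpf_meas[measurable]: "bpf p q \<in> borel_measurable borel"
  unfolding bpf_def by measurable

lemma bp_dens_eq: "betaprime_density p q x = indicator {0<..} x * (bpK p q * bpf p q x)"
  by (simp add: betaprime_density_def bpK_def bpf_def indicator_def)

lemma bp_dens_nonneg: "0 < p \<Longrightarrow> 0 < q \<Longrightarrow> 0 \<le> betaprime_density p q x"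
  by (simp add: betaprime_density_def Gamma_real_pos)

lemma bp_dens_pos: "0 < p \<Longrightarrow> 0 < q \<Longrightarrow> 0 < x \<Longrightarrow> 0 < betaprime_density p q x"
  by (simp add: betaprime_density_def Gamma_real_pos)

lemma bp_dens_meas[measurable]: "betaprime_density p q \<in> borel_measurable borel"
  unfolding betaprime_density_def by measurable

lemma sets_betaprime[simp, measurable_cong]: "sets (betaprime p q) = sets borel"
  by (simp add: betaprime_def)

lemma space_betaprime[simp]: "space (betaprime p q) = UNIV"
  by (simp add: betaprime_def)

lemma bp_emeasure: "A \<in> sets borel \<Longrightarrow> emeasure (betaprime p q) A = (\<integral>\<^sup>+x. ennreal (indicator A x * betaprime_density p q x) \<partial>lborel)"
  unfolding betaprime_def
  by (subst emeasure_density) (auto intro!: nn_integral_cong simp: indicator_def)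

lemma bp_measure:
  assumes p: "0 < p" and q: "0 < q" and A: "A \<in> sets borel"
  shows "measure (betaprime p q) A = (LINT x:A|lborel. betaprime_density p q x)"
proof -
  have "(LINT x:A|lborel. betaprime_density p q x) = enn2real (\<integral>\<^sup>+x. ennreal (indicator A x * betaprime_density p q x) \<partial>lborel)"
    unfolding set_lebesgue_integral_def using A
    by (subst integral_eq_nn_integral) (auto simp: bp_dens_nonneg[OF p q])
  then show ?thesis using A by (simp add: measure_def bp_emeasure)
qed

lemma bp_total:
  assumes p: "0 < p" and q: "0 < q"
  shows "emeasure (betaprime p q) UNIV = 1"
proof -
  have I: "integrable lborel (\<lambda>x. indicator {0<..} x *\<^sub>R bpf p q x)"
    using bpf_norm(1)[OF p q] by (simp add: set_integrable_def)
  have "emeasure (betaprime p q) UNIV = (\<integral>\<^sup>+x. ennreal (bpK p q * (indicator {0<..} x *\<^sub>R bpf p q x)) \<partial>lborel)"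
    by (subst bp_emeasure) (auto simp: bp_dens_eq mult_ac)
  also have "\<dots> = ennreal (bpK p q) * (\<integral>\<^sup>+x. ennreal (indicator {0<..} x *\<^sub>R bpf p q x) \<partial>lborel)"
    using bpK_pos[OF p q] by (subst nn_integral_cmult[symmetric]) (auto intro!: nn_integral_cong simp: ennreal_mult')
  also have "(\<integral>\<^sup>+x. ennreal (indicator {0<..} x *\<^sub>R bpf p q x) \<partial>lborel) = ennreal (Beta p q)"
    using bpf_norm(2)[OF p q] I
    by (subst nn_integral_eq_integral) (auto simp: set_lebesgue_integral_def bpf_def indicator_def)
  also have "ennreal (bpK p q) * ennreal (Beta p q) = 1"
    using bpK_Beta[OF p q] bpK_pos[OF p q] by (simp add: ennreal_mult'[symmetric])
  finally show ?thesis .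
qed

lemma bp_real_distribution:
  assumes p: "0 < p" and q: "0 < q"
  shows "real_distribution (betaprime p q)"
proof -
  have "prob_space (betaprime p q)"
    by (rule prob_spaceI) (use bp_total[OF p q] in simp)
  then show ?thesis unfolding real_distribution_def real_distribution_axioms_def by simp
qed


lemma bp_cont_on:
  assumes p: "0 < p" and q: "0 < q" and c: "0 < c"
  shows "continuous_on {c..d} (betaprime_density p q)"
proof -
  have "continuous_on {c..d} (\<lambda>x. Gamma (p + q) / (Gamma p * Gamma q) * x powr (p - 1) / (1 + x) powr (p + q))"
    using c by (intro continuous_intros) auto
  then show ?thesis
    by (rule continuous_on_cong[THEN iffD1, rotated 2]) (use c in \<open>auto simp: betaprime_density_def\<close>)
qed

lemma bp_cdf_diff:
  assumes p: "0 < p" and q: "0 < q" and "c \<le> u"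
  shows "cdf (betaprime p q) u = cdf (betaprime p q) c + (LBINT x=c..u. betaprime_density p q x)"
proof -
  interpret real_distribution "betaprime p q" by (rule bp_real_distribution[OF p q])
  show ?thesis
  proof (cases "c = u")
    case True then show ?thesis by simp
  next
    case False
    then have "c < u" using assms by simp
    then have "cdf (betaprime p q) u - cdf (betaprime p q) c = measure (betaprime p q) {c<..u}"
      by (rule cdf_diff_eq)
    also have "\<dots> = (LINT x:{c<..u}|lborel. betaprime_density p q x)"
      by (rule bp_measure[OF p q]) simp
    also have "\<dots> = (LBINT x=c..u. betaprime_density p q x)"
      using \<open>c < u\<close> by (simp add: interval_integral_Ioc)
    finally show ?thesis by simp
  qed
qed

lemma bp_cdf_deriv:
  assumes p: "0 < p" and q: "0 < q" and y: "0 < y"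
  shows "(cdf (betaprime p q) has_real_derivative betaprime_density p q y) (at y)"
proof -
  define c where "c = y / 2"
  define d where "d = y + 1"
  have c: "0 < c" "c < y" "y < d" using y by (auto simp: c_def d_def)
  have "((\<lambda>u. LBINT x=c..u. betaprime_density p q x) has_vector_derivative betaprime_density p q y) (at y within {c..d})"
    by (rule interval_integral_FTC2) (use c in \<open>auto intro: bp_cont_on[OF p q]\<close>)
  moreover have "at y within {c..d} = at y"
    by (rule at_within_interior) (use c in auto)
  ultimately have "((\<lambda>u. LBINT x=c..u. betaprime_density p q x) has_real_derivative betaprime_density p q y) (at y)"
    by (simp add: has_real_derivative_iff_has_vector_derivative)
  then have "((\<lambda>u. cdf (betaprime p q) c + (LBINT x=c..u. betaprime_density p q x)) has_real_derivative betaprime_density p q y) (at y)"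
    by (auto intro!: derivative_eq_intros)
  then show ?thesis
  proof (rule has_field_derivative_transform_within_open[where S="{c<..}"])
    fix z assume "z \<in> {c<..}"
    then show "cdf (betaprime p q) c + (LBINT x=c..z. betaprime_density p q x) = cdf (betaprime p q) z"
      using bp_cdf_diff[OF p q, of c z] by simp
  qed (use c in auto)
qed

lemma bp_cdf_nonpos:
  assumes p: "0 < p" and q: "0 < q" and x: "x \<le> 0"
  shows "cdf (betaprime p q) x = 0"
proof -
  have "cdf (betaprime p q) x = (LINT t:{..x}|lborel. betaprime_density p q t)"
    unfolding cdf_def by (rule bp_measure[OF p q]) simp
  also have "\<dots> = (LINT t:{..x}|lborel. 0)"
    by (rule set_lebesgue_integral_cong) (use x in \<open>auto simp: betaprime_density_def\<close>)
  finally show ?thesis by simp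
qed

lemma bp_cdf_isCont:
  assumes p: "0 < p" and q: "0 < q"
  shows "isCont (cdf (betaprime p q)) x"
proof -
  interpret real_distribution "betaprime p q" by (rule bp_real_distribution[OF p q])
  have ae: "AE t in lborel. t \<in> {x} \<longrightarrow> ennreal (betaprime_density p q t) = 0"
    using AE_lborel_singleton[of x] by (rule eventually_mono) auto
  have m: "(\<lambda>t. ennreal (betaprime_density p q t)) \<in> borel_measurable lborel" by measurable
  have "{x} \<in> null_sets (betaprime p q)"
    unfolding betaprime_def using null_sets_density_iff[OF m] ae by simp
  then have "measure (betaprime p q) {x} = 0" by (simp add: measure_def null_setsD1)
  then show ?thesis by (simp add: isCont_cdf)
qed

lemma bp_cdf_lim:
  assumes p: "0 < p" and q: "0 < q"
  shows "(cdf (betaprime p q) \<longlongrightarrow> 1) at_top"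
proof -
  interpret real_distribution "betaprime p q" by (rule bp_real_distribution[OF p q])
  show ?thesis by (rule cdf_lim_at_top_prob)
qed


lemma no_dip_rise:
  fixes \<psi> h g :: "real \<Rightarrow> real"
  assumes cont: "continuous_on {0..} \<psi>"
    and der: "\<And>x. 0 < x \<Longrightarrow> (\<psi> has_real_derivative h x * g x) (at x)"
    and hpos: "\<And>x. 0 < x \<Longrightarrow> 0 < h x"
    and gmono: "\<And>x y. 0 < x \<Longrightarrow> x \<le> y \<Longrightarrow> g y \<le> g x"
    and uv: "0 < u" "u < v" "\<psi> u < \<psi> 0" "\<psi> u < \<psi> v"
  shows False
proof -
  have dif: "\<psi> differentiable (at x)" if "0 < x" for x
    using der[OF that] real_differentiable_def by blast
  have c1: "continuous_on {0..u} \<psi>" by (rule continuous_on_subset[OF cont]) auto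
  have d1: "\<And>x. 0 < x \<Longrightarrow> x < u \<Longrightarrow> \<psi> differentiable (at x)" using dif by simp
  obtain l z where z: "0 < z" "z < u" "DERIV \<psi> z :> l" "\<psi> u - \<psi> 0 = (u - 0) * l"
    using MVT[OF uv(1) c1 d1] by blast
  have "l = h z * g z" using DERIV_unique[OF z(3) der[OF z(1)]] .
  moreover have "l < 0"
  proof -
    have "u * l < 0" using z(4) uv(3) by simp
    then show ?thesis using uv(1) by (simp add: mult_less_0_iff)
  qed
  ultimately have gz: "g z < 0" using hpos[OF z(1)] by (simp add: mult_less_0_iff)
  have c2: "continuous_on {u..v} \<psi>" by (rule continuous_on_subset[OF cont]) (use uv in auto)
  have d2: "\<And>x. u < x \<Longrightarrow> x < v \<Longrightarrow> \<psi> differentiable (at x)" using dif uv by simp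
  obtain l' w where w: "u < w" "w < v" "DERIV \<psi> w :> l'" "\<psi> v - \<psi> u = (v - u) * l'"
    using MVT[OF uv(2) c2 d2] by blast
  have w0: "0 < w" using w uv by simp
  have "l' = h w * g w" using DERIV_unique[OF w(3) der[OF w0]] .
  moreover have "l' > 0"
  proof -
    have "(v - u) * l' > 0" using w(4) uv(4) by simp
    then show ?thesis using uv(2) by (simp add: zero_less_mult_iff)
  qed
  ultimately have gw: "g w > 0" using hpos[OF w0] by (simp add: zero_less_mult_iff)
  have "g w \<le> g z" using gmono[of z w] z w by simp
  then show False using gz gw by simp
qed

lemma phi_nonneg:
  fixes \<phi> \<psi> h g k :: "real \<Rightarrow> real"
  assumes cont: "continuous_on {0..} \<psi>"
    and der: "\<And>x. 0 < x \<Longrightarrow> (\<psi> has_real_derivative h x * g x) (at x)"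
    and hpos: "\<And>x. 0 < x \<Longrightarrow> 0 < h x"
    and gmono: "\<And>x y. 0 < x \<Longrightarrow> x \<le> y \<Longrightarrow> g y \<le> g x"
    and \<psi>0: "\<psi> 0 = 0"
    and contphi: "continuous_on {0..} \<phi>"
    and derphi: "\<And>x. 0 < x \<Longrightarrow> (\<phi> has_real_derivative k x * \<psi> x) (at x)"
    and kpos: "\<And>x. 0 < x \<Longrightarrow> 0 < k x"
    and \<phi>0: "\<phi> 0 = 0"
    and lim: "(\<phi> \<longlongrightarrow> 0) at_top"
    and x: "0 \<le> x"
  shows "0 \<le> \<phi> x"
proof (cases "x = 0")
  case True then show ?thesis using \<phi>0 by simp
next
  case False
  then have x: "0 < x" using x by simp
  show ?thesis
  proof (cases "\<psi> x \<ge> 0")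
    case True
    have pos: "\<psi> z \<ge> 0" if "0 < z" "z < x" for z
    proof (rule ccontr)
      assume "\<not> 0 \<le> \<psi> z"
      then show False using no_dip_rise[OF cont der hpos gmono, of z x] that True \<psi>0 by linarith
    qed
    have "\<phi> 0 \<le> \<phi> x"
    proof (rule DERIV_nonneg_imp_increasing_open[of 0 x])
      show "continuous_on {0..x} \<phi>" by (rule continuous_on_subset[OF contphi]) auto
      fix z assume z: "0 < z" "z < x"
      show "\<exists>y. DERIV \<phi> z :> y \<and> 0 \<le> y"
        using derphi[OF z(1)] kpos[OF z(1)] pos[OF z] by (intro exI[of _ "k z * \<psi> z"]) simp
    qed (use x in simp)
    then show ?thesis using \<phi>0 by simp
  next
    case False
    have neg: "\<psi> z \<le> 0" if "x < z" for z
    proof (rule ccontr)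
      assume "\<not> \<psi> z \<le> 0"
      then show False using no_dip_rise[OF cont der hpos gmono, of x z] that False \<psi>0 x by linarith
    qed
    have le: "\<phi> y \<le> \<phi> x" if "x \<le> y" for y
    proof (rule DERIV_nonpos_imp_decreasing_open[of x y])
      show "continuous_on {x..y} \<phi>" by (rule continuous_on_subset[OF contphi]) (use x in auto)
      fix z assume z: "x < z" "z < y"
      have z0: "0 < z" using x z by simp
      show "\<exists>y. DERIV \<phi> z :> y \<and> y \<le> 0"
        using derphi[OF z0] kpos[OF z0] neg[OF z(1)]
        by (intro exI[of _ "k z * \<psi> z"]) (simp add: mult_nonneg_nonpos)
    qed (use that in simp)
    show ?thesis
    proof (rule tendsto_upperbound[OF lim])
      show "\<forall>\<^sub>F y in at_top. \<phi> y \<le> \<phi> x" using eventually_ge_at_top[of x] by (rule eventually_mono) (rule le)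
    qed simp
  qed
qed


lemma pow_split1: "0 < x \<Longrightarrow> (x::real) powr a = x * x powr (a - 1)"
  by (metis add.commute diff_add_cancel powr_add powr_one_gt_zero_iff powr_one order_less_imp_le less_irrefl) 

lemma bp_dens_pos_eq: "0 < x \<Longrightarrow> betaprime_density p q x = bpK p q * x powr (p - 1) / (1 + x) powr (p + q)"
  by (simp add: betaprime_density_def bpK_def)

lemma psi_deriv:
  fixes a b c :: real
  assumes a: "0 < a" and b: "0 < b" and x: "0 < x"
  shows "((\<lambda>x. c * (x powr a * (1 + x) powr (-a)) - cdf (betaprime a b) x) has_real_derivative
     (x powr (a - 1) * (1 + x) powr (-a - 1)) * (c * a - bpK a b * (1 + x) powr (1 - b))) (at x)"
proof -
  have d1: "((\<lambda>x. x powr a) has_real_derivative a * x powr (a - 1)) (at x)"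
    by (rule has_real_derivative_powr[OF x])
  have d2: "((\<lambda>x. (1 + x) powr (-a)) has_real_derivative (-a) * (1 + x) powr (-a - 1) * 1) (at x)"
    using x by (intro DERIV_chain2[OF has_real_derivative_powr]) (auto intro!: derivative_eq_intros)
  have d: "((\<lambda>x. c * (x powr a * (1 + x) powr (-a)) - cdf (betaprime a b) x) has_real_derivative
     c * (a * x powr (a - 1) * (1 + x) powr (-a) + (-a) * (1 + x) powr (-a - 1) * 1 * x powr a) - betaprime_density a b x) (at x)"
    by (intro DERIV_diff DERIV_cmult DERIV_mult d1 d2 bp_cdf_deriv a b x)
  have e1: "x powr a = x * x powr (a - 1)" using x by (rule pow_split1)
  have e2: "(1 + x) powr (-a) = (1 + x) * (1 + x) powr (-a - 1)"
    using pow_split1[of "1 + x" "-a"] x by simp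
  have e3: "(1 + x) powr (a + b) * ((1 + x) powr (-a - 1) * (1 + x) powr (1 - b)) = 1"
  proof -
    have "(1 + x) powr (a + b) * ((1 + x) powr (-a - 1) * (1 + x) powr (1 - b)) = (1 + x) powr ((a + b) + (-a - 1) + (1 - b))"
      by (simp only: powr_add mult.assoc)
    also have "\<dots> = 1" using x by simp
    finally show ?thesis .
  qed
  have "c * (a * x powr (a - 1) * (1 + x) powr (-a) + (-a) * (1 + x) powr (-a - 1) * 1 * x powr a) - betaprime_density a b x
     = (x powr (a - 1) * (1 + x) powr (-a - 1)) * (c * a - bpK a b * (1 + x) powr (1 - b))"
  proof -
    have f: "betaprime_density a b x = bpK a b * x powr (a - 1) * ((1 + x) powr (-a - 1) * (1 + x) powr (1 - b))"
      using e3 x by (simp add: bp_dens_pos_eq field_simps)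
    show ?thesis unfolding f e1 e2 by (simp add: algebra_simps)
  qed
  then show ?thesis using d by simp
qed

lemma cdf_sq_le:
  fixes a b x :: real
  assumes a: "0 < a" and b: "0 < b" and b1: "b \<le> 1" and x: "0 \<le> x"
  shows "cdf (betaprime a b) x ^ 2 \<le> cdf (betaprime (2 * a) b) x"
proof -
  define F1 where "F1 = cdf (betaprime a b)"
  define F2 where "F2 = cdf (betaprime (2 * a) b)"
  define K1 where "K1 = bpK a b"
  define K2 where "K2 = bpK (2 * a) b"
  define c where "c = K2 / (2 * K1)"
  have a2: "0 < 2 * a" using a by simp
  have K1: "0 < K1" using bpK_pos[OF a b] by (simp add: K1_def)
  define \<psi> where "\<psi> = (\<lambda>x. c * (x powr a * (1 + x) powr (-a)) - F1 x)"
  define h where "h = (\<lambda>x::real. x powr (a - 1) * (1 + x) powr (-a - 1))"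
  define g where "g = (\<lambda>x::real. c * a - K1 * (1 + x) powr (1 - b))"
  define \<phi> where "\<phi> = (\<lambda>x. F2 x - F1 x ^ 2)"
  define k where "k = (\<lambda>x. 2 * betaprime_density a b x)"
  have contF1: "continuous_on {0..} F1"
    unfolding F1_def by (intro continuous_at_imp_continuous_on ballI bp_cdf_isCont a b)
  have contF2: "continuous_on {0..} F2"
    unfolding F2_def by (intro continuous_at_imp_continuous_on ballI bp_cdf_isCont a2 b)
  have cont: "continuous_on {0..} \<psi>"
    unfolding \<psi>_def using a
    by (intro continuous_intros contF1 continuous_on_powr') (auto intro: continuous_intros)
  have der: "(\<psi> has_real_derivative h x * g x) (at x)" if "0 < x" for x
    unfolding \<psi>_def h_def g_def F1_def K1_def by (rule psi_deriv[OF a b that])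
  have hpos: "0 < h x" if "0 < x" for x
    using that by (simp add: h_def)
  have gmono: "g y \<le> g x" if "0 < x" "x \<le> y" for x y
  proof -
    have "(1 + x) powr (1 - b) \<le> (1 + y) powr (1 - b)"
      using that b1 by (intro powr_mono2) auto
    then show ?thesis unfolding g_def using K1 by (simp add: mult_left_mono)
  qed
  have \<psi>0: "\<psi> 0 = 0" by (simp add: \<psi>_def F1_def bp_cdf_nonpos[OF a b])
  have contphi: "continuous_on {0..} \<phi>"
    unfolding \<phi>_def by (intro continuous_intros contF1 contF2)
  have derphi: "(\<phi> has_real_derivative k x * \<psi> x) (at x)" if x: "0 < x" for x
  proof -
    have d: "(\<phi> has_real_derivative betaprime_density (2 * a) b x - (betaprime_density a b x * F1 x + betaprime_density a b x * F1 x)) (at x)"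
      unfolding \<phi>_def power2_eq_square F1_def F2_def
      by (intro DERIV_diff DERIV_mult bp_cdf_deriv a b a2 x)
    have e1: "x powr (a - 1) * x powr a = x powr (2 * a - 1)"
      by (simp add: powr_add[symmetric])
    have e2: "(1 + x) powr (2 * a + b) * (1 + x) powr (-a) = (1 + x) powr (a + b)"
      by (simp add: powr_add[symmetric])
    have f2: "betaprime_density (2 * a) b x = (K2 / K1) * betaprime_density a b x * (x powr a * (1 + x) powr (-a))"
    proof -
      have "(K2 / K1) * betaprime_density a b x * (x powr a * (1 + x) powr (-a))
          = K2 * (x powr (a - 1) * x powr a) * (1 + x) powr (-a) / (1 + x) powr (a + b)"
        using K1 x by (simp add: bp_dens_pos_eq K1_def field_simps)
      also have "\<dots> = K2 * x powr (2 * a - 1) / (1 + x) powr (2 * a + b)"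
        unfolding e1 e2[symmetric] using x by (simp add: field_simps)
      finally show ?thesis using x by (simp add: bp_dens_pos_eq K2_def)
    qed
    have "betaprime_density (2 * a) b x - (betaprime_density a b x * F1 x + betaprime_density a b x * F1 x) = k x * \<psi> x"
      unfolding f2 k_def \<psi>_def c_def using K1 by (simp add: field_simps)
    then show ?thesis using d by simp
  qed
  have kpos: "0 < k x" if "0 < x" for x
    using bp_dens_pos[OF a b that] by (simp add: k_def)
  have \<phi>0: "\<phi> 0 = 0" by (simp add: \<phi>_def F1_def F2_def bp_cdf_nonpos[OF a b] bp_cdf_nonpos[OF a2 b])
  have lim: "(\<phi> \<longlongrightarrow> 0) at_top"
  proof -
    have "((\<lambda>x. F2 x - F1 x ^ 2) \<longlongrightarrow> 1 - 1 ^ 2) at_top"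
      unfolding F1_def F2_def by (intro tendsto_intros bp_cdf_lim a b a2)
    then show ?thesis by (simp add: \<phi>_def)
  qed
  have "0 \<le> \<phi> x" by (rule phi_nonneg[OF cont der hpos gmono \<psi>0 contphi derphi kpos \<phi>0 lim x])
  then show ?thesis by (simp add: \<phi>_def F1_def F2_def)
qed




lemma conv_cdf_le:
  assumes "real_distribution M" and M0: "measure M {..0} = 0"
  shows "measure (M \<star> M) {..x} \<le> measure M {..x} ^ 2"
proof -
  interpret real_distribution M by fact
  have fin: "finite_measure M" by (rule finite_measure_axioms)
  interpret C: finite_measure "M \<star> M" by (rule convolution_finite) (auto simp: fin)
  have U1: "emeasure M UNIV = 1" using emeasure_space_1 by simp
  have null: "{..0} \<in> null_sets M"
    using M0 by (auto simp: null_sets_def emeasure_eq_measure)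
  have AE0: "AE u in M. 0 < u"
    by (rule AE_I'[OF null]) auto
  have "emeasure (M \<star> M) {..x} = (\<integral>\<^sup>+u. \<integral>\<^sup>+v. indicator {..x} (u + v) \<partial>M \<partial>M)"
    by (rule convolution_emeasure') (auto simp: fin)
  also have "\<dots> \<le> (\<integral>\<^sup>+u. indicator {..x} u * emeasure M {..x} \<partial>M)"
  proof (rule nn_integral_mono_AE)
    show "AE u in M. (\<integral>\<^sup>+v. indicator {..x} (u + v) \<partial>M) \<le> indicator {..x} u * emeasure M {..x}"
      using AE0
    proof (rule eventually_mono)
      fix u :: real assume u: "0 < u"
      have "(\<integral>\<^sup>+v. indicator {..x} (u + v) \<partial>M) \<le> (\<integral>\<^sup>+v. indicator {..x} u * indicator {..x} v \<partial>M)"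
        using AE0
      proof (intro nn_integral_mono_AE, elim eventually_mono)
        fix v :: real assume "0 < v"
        then show "indicator {..x} (u + v) \<le> (indicator {..x} u * indicator {..x} v :: ennreal)"
          using u by (auto split: split_indicator)
      qed
      also have "\<dots> = indicator {..x} u * emeasure M {..x}"
        by (subst nn_integral_cmult) auto
      finally show "(\<integral>\<^sup>+v. indicator {..x} (u + v) \<partial>M) \<le> indicator {..x} u * emeasure M {..x}" .
    qed
  qed
  also have "\<dots> = emeasure M {..x} * emeasure M {..x}"
    by (subst nn_integral_multc) auto
  finally have "ennreal (measure (M \<star> M) {..x}) \<le> ennreal (measure M {..x} * measure M {..x})"
    by (simp add: C.emeasure_eq_measure emeasure_eq_measure ennreal_mult')
  then show ?thesis by (simp add: power2_eq_square ennreal_le_iff)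
qed



lemma ind3: fixes x u v t :: real shows "(indicator {x<..} (u + v) :: ennreal) \<le> indicator {x - t<..} u + indicator {x - t<..} v + indicator {t<..} u * indicator {t<..} v"
proof (cases "x < u + v")
  case True
  then have d: "x - t < u \<or> x - t < v \<or> (t < u \<and> t < v)" by linarith
  have "(indicator {x<..} (u + v) :: ennreal) \<le> 1" by (simp add: indicator_def)
  also have "(1::ennreal) \<le> indicator {x - t<..} u + indicator {x - t<..} v + indicator {t<..} u * indicator {t<..} v"
    using d
  proof (elim disjE conjE)
    assume "x - t < u" then show ?thesis by (simp add: indicator_def add.assoc)
  next
    assume "x - t < v" then show ?thesis by (simp add: indicator_def add.commute add.left_commute)
  next
    assume "t < u" "t < v" then show ?thesis by (simp add: indicator_def)
  qed
  finally show ?thesis .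
next
  case False then show ?thesis by (simp add: indicator_def)
qed

lemma enn_aux: fixes A B :: real assumes A: "0 \<le> A" and B: "0 \<le> B"
  shows "ennreal A + ennreal A + ennreal B * ennreal B = ennreal (2 * A + B ^ 2)"
proof -
  have 1: "ennreal (2 * A + B ^ 2) = ennreal (A + A) + ennreal (B * B)"
    using A B by (subst ennreal_plus[symmetric]) (auto simp: power2_eq_square)
  have 2: "ennreal (A + A) = ennreal A + ennreal A" using A by (rule ennreal_plus) (rule A)
  have 3: "ennreal (B * B) = ennreal B * ennreal B" using B by (rule ennreal_mult) (rule B)
  show ?thesis unfolding 1 2 3 ..
qed

lemma conv_tail_le:
  assumes "real_distribution M"
  shows "measure (M \<star> M) {x<..} \<le> 2 * measure M {x - t<..} + measure M {t<..} ^ 2"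
proof -
  interpret real_distribution M by fact
  have fin: "finite_measure M" by (rule finite_measure_axioms)
  interpret C: finite_measure "M \<star> M" by (rule convolution_finite) (auto simp: fin)
  have U1: "emeasure M UNIV = 1" using emeasure_space_1 by simp
  have "emeasure (M \<star> M) {x<..} = (\<integral>\<^sup>+u. \<integral>\<^sup>+v. indicator {x<..} (u + v) \<partial>M \<partial>M)"
    by (rule convolution_emeasure') (auto simp: fin)
  also have "\<dots> \<le> (\<integral>\<^sup>+u. \<integral>\<^sup>+v. indicator {x - t<..} u + indicator {x - t<..} v + indicator {t<..} u * indicator {t<..} v \<partial>M \<partial>M)"
    by (intro nn_integral_mono ind3)
  also have "\<dots> = (\<integral>\<^sup>+u. indicator {x - t<..} u + emeasure M {x - t<..} + indicator {t<..} u * emeasure M {t<..} \<partial>M)"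
  proof (intro nn_integral_cong)
    fix u
    have "(\<integral>\<^sup>+v. indicator {x - t<..} u + indicator {x - t<..} v + indicator {t<..} u * indicator {t<..} v \<partial>M)
      = (\<integral>\<^sup>+v. indicator {x - t<..} u \<partial>M) + (\<integral>\<^sup>+v. indicator {x - t<..} v \<partial>M) + (\<integral>\<^sup>+v. indicator {t<..} u * indicator {t<..} v \<partial>M)"
      apply (subst nn_integral_add)
        apply simp
       apply simp
      apply (subst nn_integral_add)
        apply simp
       apply simp
      apply (rule refl)
      done
    also have "\<dots> = indicator {x - t<..} u + emeasure M {x - t<..} + indicator {t<..} u * emeasure M {t<..}"
    proof -
      have 1: "(\<integral>\<^sup>+v. indicator {x - t<..} u \<partial>M) = indicator {x - t<..} u" by (simp add: U1)
      have 2: "(\<integral>\<^sup>+v. indicator {t<..} u * indicator {t<..} v \<partial>M) = indicator {t<..} u * emeasure M {t<..}"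
        by (subst nn_integral_cmult) simp_all
      show ?thesis unfolding 1 2 by simp
    qed
    finally show "(\<integral>\<^sup>+v. indicator {x - t<..} u + indicator {x - t<..} v + indicator {t<..} u * indicator {t<..} v \<partial>M)
      = indicator {x - t<..} u + emeasure M {x - t<..} + indicator {t<..} u * emeasure M {t<..}" .
  qed
  also have "\<dots> = emeasure M {x - t<..} + emeasure M {x - t<..} + emeasure M {t<..} * emeasure M {t<..}"
  proof -
    have "(\<integral>\<^sup>+u. indicator {x - t<..} u + emeasure M {x - t<..} + indicator {t<..} u * emeasure M {t<..} \<partial>M)
      = (\<integral>\<^sup>+u. indicator {x - t<..} u \<partial>M) + (\<integral>\<^sup>+u. emeasure M {x - t<..} \<partial>M) + (\<integral>\<^sup>+u. indicator {t<..} u * emeasure M {t<..} \<partial>M)"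
      apply (subst nn_integral_add)
        apply simp
       apply simp
      apply (subst nn_integral_add)
        apply simp
       apply simp
      apply (rule refl)
      done
    also have "(\<integral>\<^sup>+u. emeasure M {x - t<..} \<partial>M) = emeasure M {x - t<..}" by (simp add: U1)
    also have "(\<integral>\<^sup>+u. indicator {t<..} u * emeasure M {t<..} \<partial>M) = emeasure M {t<..} * emeasure M {t<..}"
      by (subst nn_integral_multc) simp_all
    also have "(\<integral>\<^sup>+u. indicator {x - t<..} u \<partial>M) = emeasure M {x - t<..}" by simp
    finally show ?thesis .
  qed
  finally have "ennreal (measure (M \<star> M) {x<..}) \<le> ennreal (2 * measure M {x - t<..} + measure M {t<..} ^ 2)"
    unfolding C.emeasure_eq_measure emeasure_eq_measure enn_aux[OF measure_nonneg measure_nonneg] .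
  then show ?thesis by (subst (asm) ennreal_le_iff) (auto intro: add_nonneg_nonneg)
qed



lemma conv_compl:
  assumes "real_distribution M"
  shows "measure (M \<star> M) {..x} = 1 - measure (M \<star> M) {x<..}"
proof -
  interpret real_distribution M by fact
  have fin: "finite_measure M" by (rule finite_measure_axioms)
  interpret C: finite_measure "M \<star> M" by (rule convolution_finite) (auto simp: fin)
  have U1: "emeasure M UNIV = 1" using emeasure_space_1 by simp
  have "emeasure (M \<star> M) UNIV = (\<integral>\<^sup>+u. \<integral>\<^sup>+v. indicator UNIV (u + v) \<partial>M \<partial>M)"
    by (rule convolution_emeasure') (auto simp: fin)
  also have "\<dots> = 1" by (simp add: U1)
  finally have U: "measure (M \<star> M) UNIV = 1" by (simp add: C.emeasure_eq_measure)
  have "measure (M \<star> M) ({..x} \<union> {x<..}) = measure (M \<star> M) {..x} + measure (M \<star> M) {x<..}"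
    by (rule C.finite_measure_Union) auto
  moreover have "{..x} \<union> {x<..} = UNIV" by auto
  ultimately show ?thesis using U by simp
qed


lemma pos_not_nonpos_Int: "(0::real) < x \<Longrightarrow> x \<notin> \<int>\<^sub>\<le>\<^sub>0"
  by (auto elim!: nonpos_Ints_cases)

lemma gamma_ratio_mono:
  fixes b p q :: real
  assumes b: "1 < b" and p: "0 < p" and pq: "p < q"
  shows "Gamma (p + b) / Gamma (p + 1) < Gamma (q + b) / Gamma (q + 1)"
proof (rule DERIV_pos_imp_increasing[OF pq])
  fix s assume s: "p \<le> s" "s \<le> q"
  then have s0: "0 < s" using p by simp
  have nz1: "s + b \<notin> \<int>\<^sub>\<le>\<^sub>0" "s + 1 \<notin> \<int>\<^sub>\<le>\<^sub>0" using s0 b by (auto intro!: pos_not_nonpos_Int)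
  have d1: "((\<lambda>s. Gamma (s + b)) has_real_derivative Gamma (s + b) * Digamma (s + b) * 1) (at s)"
    by (rule DERIV_chain2[where g="\<lambda>s. s + b" and x=s, OF has_field_derivative_Gamma[OF nz1(1), where A=UNIV]]) (auto intro!: derivative_eq_intros)
  have d2: "((\<lambda>s. Gamma (s + 1)) has_real_derivative Gamma (s + 1) * Digamma (s + 1) * 1) (at s)"
    by (rule DERIV_chain2[where g="\<lambda>s. s + 1" and x=s, OF has_field_derivative_Gamma[OF nz1(2), where A=UNIV]]) (auto intro!: derivative_eq_intros)
  have G1: "0 < Gamma (s + 1)" "0 < Gamma (s + b)" using s0 b by auto
  have d: "((\<lambda>s. Gamma (s + b) / Gamma (s + 1)) has_real_derivative
      (Gamma (s + b) * Digamma (s + b) * 1 * Gamma (s + 1) - Gamma (s + b) * (Gamma (s + 1) * Digamma (s + 1) * 1)) / (Gamma (s + 1) * Gamma (s + 1))) (at s)"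
    by (rule DERIV_divide[OF d1 d2]) (use G1 in simp)
  have "Digamma (s + 1) < Digamma (s + b)" using s0 b by (intro Digamma_real_strict_mono) auto
  then have "0 < (Gamma (s + b) * Digamma (s + b) * 1 * Gamma (s + 1) - Gamma (s + b) * (Gamma (s + 1) * Digamma (s + 1) * 1)) / (Gamma (s + 1) * Gamma (s + 1))"
    using G1 by (simp add: field_simps)
  then show "\<exists>y. ((\<lambda>s. Gamma (s + b) / Gamma (s + 1)) has_real_derivative y) (at s) \<and> 0 < y"
    using d by blast
qed

lemma K_ineq:
  fixes a b :: real
  assumes a: "0 < a" and b: "1 < b"
  shows "2 * bpK a b < bpK (2 * a) b"
proof -
  have e: "Gamma (p + b) / Gamma p = p * (Gamma (p + b) / Gamma (p + 1))" if "0 < p" for p :: real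
  proof -
    have "Gamma (p + 1) = p * Gamma p" using that by (intro Gamma_plus1 pos_not_nonpos_Int)
    then show ?thesis using that Gamma_real_pos[OF that] by (simp add: field_simps)
  qed
  have m: "Gamma (a + b) / Gamma (a + 1) < Gamma (2 * a + b) / Gamma (2 * a + 1)"
    using gamma_ratio_mono[OF b a, of "2 * a"] a by simp
  have Gb: "0 < Gamma b" using b by simp
  have ea: "Gamma (a + 1) = a * Gamma a" using a by (intro Gamma_plus1 pos_not_nonpos_Int)
  have ea2: "Gamma (2 * a + 1) = (2 * a) * Gamma (2 * a)" using a by (intro Gamma_plus1 pos_not_nonpos_Int) simp
  have "2 * bpK a b = 2 * a * (Gamma (a + b) / Gamma (a + 1)) / Gamma b"
    unfolding bpK_def ea using a Gamma_real_pos[OF a] Gb by (simp add: field_simps)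
  also have "\<dots> < 2 * a * (Gamma (2 * a + b) / Gamma (2 * a + 1)) / Gamma b"
    using m a Gb by (intro divide_strict_right_mono mult_strict_left_mono) auto
  also have "\<dots> = bpK (2 * a) b"
    unfolding bpK_def ea2 using a Gamma_real_pos[of "2 * a"] Gb by (simp add: field_simps)
  finally show ?thesis .
qed


lemma bp_tail_eq:
  assumes p: "0 < p" and q: "0 < q"
  shows "measure (betaprime p q) {y<..} = 1 - cdf (betaprime p q) y"
proof -
  interpret real_distribution "betaprime p q" by (rule bp_real_distribution[OF p q])
  have "prob (space (betaprime p q) - {..y}) = 1 - prob {..y}" by (rule prob_compl) simp
  moreover have "space (betaprime p q) - {..y} = {y<..}" by auto
  ultimately show ?thesis by (simp add: cdf_def)
qed

lemma tail_upper:
  fixes a b y :: real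
  assumes a: "0 < a" and b: "0 < b" and y: "0 < y"
  shows "measure (betaprime a b) {y<..} \<le> (bpK a b / b) * y powr (-b)"
proof -
  define K where "K = bpK a b"
  define F where "F = cdf (betaprime a b)"
  define G where "G = (\<lambda>z. (K / b) * z powr (-b) - (1 - F z))"
  have K: "0 < K" using bpK_pos[OF a b] by (simp add: K_def)
  have derG: "(G has_real_derivative (K / b) * ((-b) * z powr (-b - 1)) + betaprime_density a b z) (at z)" if z: "0 < z" for z
  proof -
    have "(G has_real_derivative (K / b) * ((-b) * z powr (-b - 1)) - (0 - betaprime_density a b z)) (at z)"
      unfolding G_def F_def
      by (intro DERIV_diff DERIV_cmult has_real_derivative_powr z DERIV_const bp_cdf_deriv a b)
    then show ?thesis by simp
  qed
  have fle: "betaprime_density a b z \<le> K * z powr (-b - 1)" if z: "0 < z" for z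
  proof -
    have "z powr (a + b) \<le> (1 + z) powr (a + b)" using z a b by (intro powr_mono2) auto
    then have "K * z powr (a - 1) / (1 + z) powr (a + b) \<le> K * z powr (a - 1) / z powr (a + b)"
      using z K by (intro divide_left_mono mult_nonneg_nonneg mult_pos_pos) auto
    also have "\<dots> = K * z powr (-b - 1)"
    proof -
      have ex: "a - 1 - (a + b) = -b - 1" by simp
      have "z powr (a - 1) / z powr (a + b) = z powr (-b - 1)"
        using powr_diff[of z "a - 1" "a + b"] unfolding ex by simp
      then show ?thesis by (metis times_divide_eq_right)
    qed
    finally show ?thesis using z by (simp add: bp_dens_pos_eq K_def)
  qed
  have contG: "continuous_on {y..z} G" if "y \<le> z" for z
    unfolding G_def F_def using y
    by (intro continuous_intros continuous_at_imp_continuous_on ballI bp_cdf_isCont a b) auto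
  have dec: "G z \<le> G y" if "y \<le> z" for z
  proof (rule DERIV_nonpos_imp_decreasing_open[OF that _ contG[OF that]])
    fix w assume w: "y < w" "w < z"
    then have w0: "0 < w" using y by simp
    have "(K / b) * ((-b) * w powr (-b - 1)) + betaprime_density a b w \<le> 0"
      using fle[OF w0] b by (simp add: field_simps)
    then show "\<exists>d. (G has_real_derivative d) (at w) \<and> d \<le> 0" using derG[OF w0] by blast
  qed
  have lim: "(G \<longlongrightarrow> (K / b) * 0 - (1 - 1)) at_top"
    unfolding G_def F_def using b
    by (intro tendsto_intros bp_cdf_lim a b tendsto_neg_powr filterlim_ident) auto
  then have lim': "(G \<longlongrightarrow> 0) at_top" by simp
  have "0 \<le> G y"
  proof (rule tendsto_upperbound[OF lim'])
    show "\<forall>\<^sub>F z in at_top. G z \<le> G y" using eventually_ge_at_top[of y] by (rule eventually_mono) (rule dec)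
  qed simp_all
  then show ?thesis by (simp add: G_def F_def K_def bp_tail_eq[OF a b])
qed

lemma tail_lower:
  fixes p b x :: real
  assumes p: "0 < p" and b: "0 < b" and x: "0 < x"
  shows "(bpK p b / b) * (x powr p * (1 + x) powr (-p - b)) \<le> measure (betaprime p b) {x<..}"
proof -
  define K where "K = bpK p b"
  define F where "F = cdf (betaprime p b)"
  define H where "H = (\<lambda>z. (1 - F z) - (K / b) * (z powr p * (1 + z) powr (-p - b)))"
  have K: "0 < K" using bpK_pos[OF p b] by (simp add: K_def)
  have derH: "(H has_real_derivative (0 - betaprime_density p b z) - (K / b) * (p * z powr (p - 1) * (1 + z) powr (-p - b) + (-p - b) * (1 + z) powr (-p - b - 1) * 1 * z powr p)) (at z)" if z: "0 < z" for z
  proof -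
    have d2: "((\<lambda>x. (1 + x) powr (-p - b)) has_real_derivative (-p - b) * (1 + z) powr (-p - b - 1) * 1) (at z)"
      using z by (intro DERIV_chain2[OF has_real_derivative_powr]) (auto intro!: derivative_eq_intros)
    show ?thesis
      unfolding H_def F_def
      by (intro DERIV_diff DERIV_cmult DERIV_mult has_real_derivative_powr z DERIV_const bp_cdf_deriv p b d2)
  qed
  have dneg: "(0 - betaprime_density p b z) - (K / b) * (p * z powr (p - 1) * (1 + z) powr (-p - b) + (-p - b) * (1 + z) powr (-p - b - 1) * 1 * z powr p) \<le> 0"
    if z: "0 < z" for z
  proof -
    define P where "P = z powr (p - 1)"
    define Q where "Q = (1 + z) powr (-p - b - 1)"
    have P: "0 < P" "z powr p = z * P" using z by (auto simp: P_def intro: pow_split1)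
    have Q: "0 < Q" "(1 + z) powr (-p - b) = (1 + z) * Q"
      using z pow_split1[of "1 + z" "-p - b"] by (auto simp: Q_def)
    have f: "betaprime_density p b z = K * P * ((1 + z) * Q)"
    proof -
      have "(1 + z) powr (-p - b) = 1 / (1 + z) powr (p + b)"
        using z by (simp add: powr_minus_divide[symmetric] powr_minus)
      then show ?thesis using z Q(2) by (simp add: bp_dens_pos_eq K_def P_def)
    qed
    have r: "(0 - betaprime_density p b z) - (K / b) * (p * z powr (p - 1) * (1 + z) powr (-p - b) + (-p - b) * (1 + z) powr (-p - b - 1) * 1 * z powr p)
      = (0 - K * P * ((1 + z) * Q)) - (K / b) * (p * P * ((1 + z) * Q) + (-p - b) * Q * 1 * (z * P))"
      unfolding f P(2) Q(2) P_def[symmetric] Q_def[symmetric] ..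
    have "(0 - K * P * ((1 + z) * Q)) - (K / b) * (p * P * ((1 + z) * Q) + (-p - b) * Q * 1 * (z * P)) = - (K * P * Q * (1 + p / b))"
      using b by (simp add: field_simps)
    also have "\<dots> \<le> 0" using K P Q p b by simp
    finally show ?thesis unfolding r .
  qed
  have contH: "continuous_on {x..z} H" if "x \<le> z" for z
    unfolding H_def F_def using x
    by (intro continuous_intros continuous_at_imp_continuous_on ballI bp_cdf_isCont p b) auto
  have dec: "H z \<le> H x" if "x \<le> z" for z
  proof (rule DERIV_nonpos_imp_decreasing_open[OF that _ contH[OF that]])
    fix w assume w: "x < w" "w < z"
    then have w0: "0 < w" using x by simp
    then show "\<exists>d. (H has_real_derivative d) (at w) \<and> d \<le> 0" using derH[OF w0] dneg[OF w0] by blast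
  qed
  have lim0: "((\<lambda>z. z powr p * (1 + z) powr (-p - b)) \<longlongrightarrow> 0) at_top"
  proof (rule tendsto_sandwich[of "\<lambda>_. 0" _ _ "\<lambda>z. (1 + z) powr (-b)"])
    show "\<forall>\<^sub>F z in at_top. 0 \<le> z powr p * (1 + z) powr (-p - b)" by simp
    show "\<forall>\<^sub>F z in at_top. z powr p * (1 + z) powr (-p - b) \<le> (1 + z) powr (-b)"
      using eventually_gt_at_top[of 0]
    proof (rule eventually_mono)
      fix z :: real assume z: "0 < z"
      have "z powr p \<le> (1 + z) powr p" using z p by (intro powr_mono2) auto
      then have "z powr p * (1 + z) powr (-p - b) \<le> (1 + z) powr p * (1 + z) powr (-p - b)"
        by (intro mult_right_mono) auto
      also have "\<dots> = (1 + z) powr (-b)" by (simp add: powr_add[symmetric])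
      finally show "z powr p * (1 + z) powr (-p - b) \<le> (1 + z) powr (-b)" .
    qed
    show "((\<lambda>z. (1 + z) powr (-b)) \<longlongrightarrow> 0) at_top"
      using b by (intro tendsto_neg_powr filterlim_tendsto_add_at_top[OF tendsto_const filterlim_ident]) auto
  qed simp
  have lim: "(H \<longlongrightarrow> (1 - 1) - (K / b) * 0) at_top"
    unfolding H_def F_def by (intro tendsto_intros bp_cdf_lim p b lim0)
  then have lim': "(H \<longlongrightarrow> 0) at_top" by simp
  have "0 \<le> H x"
  proof (rule tendsto_upperbound[OF lim'])
    show "\<forall>\<^sub>F z in at_top. H z \<le> H x" using eventually_ge_at_top[of x] by (rule eventually_mono) (rule dec)
  qed simp_all
  then show ?thesis by (simp add: H_def F_def K_def bp_tail_eq[OF p b])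
qed


lemma not_dom:
  fixes a b :: real
  assumes a: "0 < a" and b: "1 < b"
  shows "\<exists>x>0. cdf (betaprime (2 * a) b) x < measure (betaprime a b \<star> betaprime a b) {..x}"
proof -
  have b0: "0 < b" using b by simp
  have a2: "0 < 2 * a" using a by simp
  define K1 where "K1 = bpK a b"
  define K2 where "K2 = bpK (2 * a) b"
  have K1: "0 < K1" using bpK_pos[OF a b0] by (simp add: K1_def)
  have K2: "0 < K2" using bpK_pos[OF a2 b0] by (simp add: K2_def)
  have Kineq: "2 * K1 < K2" using K_ineq[OF a b] by (simp add: K1_def K2_def)
  define r where "r = K2 / (2 * K1)"
  have r1: "1 < r" using Kineq K1 by (simp add: r_def field_simps)
  define e where "e = r powr (-1 / (2 * b))"
  have e0: "0 < e" using r1 by (simp add: e_def)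
  have e1: "e < 1"
  proof -
    have "r powr (-1 / (2 * b)) < r powr 0" using r1 b0 by (intro powr_less_mono) (auto simp: divide_neg_pos)
    then show ?thesis using r1 by (simp add: e_def)
  qed
  define \<epsilon> where "\<epsilon> = 1 - e"
  have \<epsilon>0: "0 < \<epsilon>" using e1 by (simp add: \<epsilon>_def)
  have eb: "e powr (-b) = r powr (1 / 2)"
    using r1 b0 by (simp add: e_def powr_powr)
  have rs: "r powr (1 / 2) < r"
  proof -
    have "r powr (1 / 2) < r powr 1" using r1 by (intro powr_less_mono) auto
    then show ?thesis using r1 by simp
  qed
  have Lpos: "2 * (K1 / b) * e powr (-b) < K2 / b"
  proof -
    have "2 * K1 * r powr (1 / 2) < 2 * K1 * r" using rs K1 by simp
    also have "2 * K1 * r = K2" using K1 by (simp add: r_def)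
    finally show ?thesis unfolding eb using b0 by (simp add: field_simps)
  qed
  define A where "A = (\<lambda>x::real. 2 * (K1 / b) * e powr (-b) + (K1 / b)^2 * (\<epsilon> powr (-b))^2 * x powr (-b))"
  define B where "B = (\<lambda>x::real. (K2 / b) * (x / (1 + x)) powr (2 * a + b))"
  have limA: "(A \<longlongrightarrow> 2 * (K1 / b) * e powr (-b) + (K1 / b)^2 * (\<epsilon> powr (-b))^2 * 0) at_top"
    unfolding A_def using b0 by (intro tendsto_intros tendsto_neg_powr filterlim_ident) auto
  have lim_frac: "((\<lambda>x::real. x / (1 + x)) \<longlongrightarrow> 1) at_top" by real_asymp
  have limB: "(B \<longlongrightarrow> (K2 / b) * 1 powr (2 * a + b)) at_top"
    unfolding B_def by (intro tendsto_intros lim_frac) auto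
  have "((\<lambda>x. B x - A x) \<longlongrightarrow> (K2 / b) * 1 powr (2 * a + b) - (2 * (K1 / b) * e powr (-b) + (K1 / b)^2 * (\<epsilon> powr (-b))^2 * 0)) at_top"
    by (intro tendsto_diff limA limB)
  moreover have "0 < (K2 / b) * 1 powr (2 * a + b) - (2 * (K1 / b) * e powr (-b) + (K1 / b)^2 * (\<epsilon> powr (-b))^2 * 0)"
    using Lpos by simp
  ultimately have ev: "\<forall>\<^sub>F x in at_top. 0 < B x - A x" by (rule order_tendstoD(1))
  have "\<forall>\<^sub>F x in at_top. 0 < x \<and> 0 < B x - A x"
    using eventually_gt_at_top[of 0] ev by (rule eventually_conj)
  then have "\<exists>x. 0 < x \<and> 0 < B x - A x"
    by (rule frequently_ex[OF eventually_frequently[rotated]]) simp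
  then obtain x where x: "0 < x" and AB: "A x < B x" by auto
  define M where "M = betaprime a b"
  have RM: "real_distribution M" unfolding M_def by (rule bp_real_distribution[OF a b0])
  define T1 where "T1 = (\<lambda>y. measure M {y<..})"
  have T1nn: "0 \<le> T1 y" for y by (simp add: T1_def)
  have xe: "x - \<epsilon> * x = e * x" by (simp add: \<epsilon>_def algebra_simps)
  have TS: "measure (M \<star> M) {x<..} \<le> 2 * T1 (e * x) + T1 (\<epsilon> * x) ^ 2"
    using conv_tail_le[OF RM, of x "\<epsilon> * x"] unfolding xe T1_def .
  have u1: "T1 (e * x) \<le> (K1 / b) * (e powr (-b) * x powr (-b))"
    using tail_upper[OF a b0, of "e * x"] e0 x by (simp add: T1_def M_def K1_def powr_mult)
  have u2: "T1 (\<epsilon> * x) \<le> (K1 / b) * (\<epsilon> powr (-b) * x powr (-b))"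
    using tail_upper[OF a b0, of "\<epsilon> * x"] \<epsilon>0 x by (simp add: T1_def M_def K1_def powr_mult)
  have u2': "T1 (\<epsilon> * x) ^ 2 \<le> ((K1 / b) * (\<epsilon> powr (-b) * x powr (-b))) ^ 2"
    using u2 T1nn by (intro power_mono) auto
  have "measure (M \<star> M) {x<..} \<le> 2 * ((K1 / b) * (e powr (-b) * x powr (-b))) + ((K1 / b) * (\<epsilon> powr (-b) * x powr (-b))) ^ 2"
    using TS u1 u2' by linarith
  also have "\<dots> = x powr (-b) * A x"
    unfolding A_def by (simp add: power2_eq_square algebra_simps)
  also have "\<dots> < x powr (-b) * B x"
    using AB x by simp
  also have "x powr (-b) * B x = (K2 / b) * (x powr (2 * a) * (1 + x) powr (-(2 * a) - b))"
  proof -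
    have "(x / (1 + x)) powr (2 * a + b) = x powr (2 * a + b) / (1 + x) powr (2 * a + b)"
      using x by (simp add: powr_divide)
    moreover have "x powr (-b) * x powr (2 * a + b) = x powr (2 * a)"
      by (simp add: powr_add[symmetric])
    moreover have "(1 + x) powr (-(2 * a) - b) = 1 / (1 + x) powr (2 * a + b)"
      using x by (simp add: powr_minus_divide[symmetric] powr_minus)
    ultimately show ?thesis unfolding B_def by (simp add: field_simps)
  qed
  also have "\<dots> \<le> measure (betaprime (2 * a) b) {x<..}"
    using tail_lower[OF a2 b0 x] by (simp add: K2_def)
  finally have lt: "measure (M \<star> M) {x<..} < measure (betaprime (2 * a) b) {x<..}" .
  have "cdf (betaprime (2 * a) b) x = 1 - measure (betaprime (2 * a) b) {x<..}"
    using bp_tail_eq[OF a2 b0, of x] by simp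
  also have "\<dots> < 1 - measure (M \<star> M) {x<..}" using lt by simp
  also have "\<dots> = measure (M \<star> M) {..x}" using conv_compl[OF RM, of x] by simp
  finally show ?thesis using x unfolding M_def by blast
qed

theorem proposition7:
  fixes a b :: real
  assumes "0 < a" and "0 < b"
  shows "stoch_dom (betaprime a b \<star> betaprime a b) (betaprime (2 * a) b) \<longleftrightarrow> b \<le> 1"
proof
  assume H: "stoch_dom (betaprime a b \<star> betaprime a b) (betaprime (2 * a) b)"
  show "b \<le> 1"
  proof (rule ccontr)
    assume "\<not> b \<le> 1"
    then have "1 < b" by simp
    from not_dom[OF assms(1) this] obtain x where x: "0 < x"
      and lt: "cdf (betaprime (2 * a) b) x < measure (betaprime a b \<star> betaprime a b) {..x}" by blast
    have "measure (betaprime a b \<star> betaprime a b) {..x} \<le> measure (betaprime (2 * a) b) {..x}"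
      using H x unfolding stoch_dom_def by simp
    then show False using lt by (simp add: cdf_def)
  qed
next
  assume b1: "b \<le> 1"
  have RM: "real_distribution (betaprime a b)" by (rule bp_real_distribution[OF assms])
  have M0: "measure (betaprime a b) {..0} = 0"
    using bp_cdf_nonpos[OF assms, of 0] by (simp add: cdf_def)
  show "stoch_dom (betaprime a b \<star> betaprime a b) (betaprime (2 * a) b)"
    unfolding stoch_dom_def
  proof (intro allI impI)
    fix x :: real assume x: "0 \<le> x"
    have "measure (betaprime a b \<star> betaprime a b) {..x} \<le> measure (betaprime a b) {..x} ^ 2"
      by (rule conv_cdf_le[OF RM M0])
    also have "\<dots> \<le> measure (betaprime (2 * a) b) {..x}"
      using cdf_sq_le[OF assms b1 x] by (simp add: cdf_def)
    finally show "measure (betaprime a b \<star> betaprime a b) {..x} \<le> measure (betaprime (2 * a) b) {..x}" .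
  qed
qed


end
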